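(* Let $\Gamma$ be a discrete subgroup of $E(n)$, and suppose that $(G,V)$ and $(G',V')$ are finite index cocompact translation pairs of $\Gamma$. Then $V'=V+a$ for some $a\in\mathbb{R}^n$; in particular $\dim V=\dim V'$.
   Context: $E(n)$ denotes the group of isometries of $\mathbb{R}^n$, each of the form $x\mapsto Ax+a$ with $A\in O(n)$, with the topology of $O(n)\times\mathbb{R}^n$; discreteness refers to this topology. For a discrete $\Gamma\le E(n)$, a subgroup $G\le\Gamma$ and an affine subspace $V\subset\mathbb{R}^n$, the pair $(G,V)$ is a cocompact translation pair of $\Gamma$ if $gV=V$ for all $g\in G$, each restriction $g|_V$ is a translation of $V$, and the quotient $V/G$ is compact; it is a finite index cocompact translation pair if moreover $[\Gamma:G]<\infty$. *)

theory Defs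
  imports "HOL-Analysis.Analysis"
begin

text \<open>The topology is that of the product
  (real^'n^'n) \<times> real^'n, restricted to O(n) \<times> R^n.\<close>

type_synonym 'n isom = "(real^'n^'n) \<times> (real^'n)"

definition Eucl :: "'n::finite isom set" where
  "Eucl = {(A, a). orthogonal_matrix A}"

definition iso_app :: "'n::finite isom \<Rightarrow> real^'n \<Rightarrow> real^'n" where
  "iso_app g x = fst g *v x + snd g"

definition iso_comp :: "'n::finite isom \<Rightarrow> 'n isom \<Rightarrow> 'n isom" where
  "iso_comp g h = (fst g ** fst h, fst g *v snd h + snd g)"

definition iso_id :: "'n::finite isom" where
  "iso_id = (mat 1, 0)"

definition iso_inv :: "'n::finite isom \<Rightarrow> 'n isom" where
  "iso_inv g = (transpose (fst g), - (transpose (fst g) *v snd g))"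

definition subgroup_E :: "'n::finite isom set \<Rightarrow> bool" where
  "subgroup_E G \<longleftrightarrow> G \<subseteq> Eucl \<and> iso_id \<in> G \<and>
     (\<forall>g\<in>G. \<forall>h\<in>G. iso_comp g h \<in> G) \<and> (\<forall>g\<in>G. iso_inv g \<in> G)"

definition discrete_subgroup_E :: "'n::finite isom set \<Rightarrow> bool" where
  "discrete_subgroup_E \<Gamma> \<longleftrightarrow> subgroup_E \<Gamma> \<and> discrete \<Gamma>"

definition finite_index :: "'n::finite isom set \<Rightarrow> 'n isom set \<Rightarrow> bool" where
  "finite_index \<Gamma> G \<longleftrightarrow> finite ((\<lambda>g. iso_comp g ` G) ` \<Gamma>)"

definition affine_subspace :: "(real^'n::finite) set \<Rightarrow> bool" where
  "affine_subspace V \<longleftrightarrow> affine V \<and> V \<noteq> {}"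

definition compact_orbit_space :: "'n::finite isom set \<Rightarrow> (real^'n) set \<Rightarrow> bool" where
  "compact_orbit_space G V \<longleftrightarrow>
     (\<exists>(Y :: (real^'n) set topology) q.
        quotient_map (top_of_set V) Y q \<and>
        (\<forall>x\<in>V. \<forall>y\<in>V. q x = q y \<longleftrightarrow> (\<exists>g\<in>G. iso_app g x = y)) \<and>
        compact_space Y)"

definition cocompact_translation_pair ::
    "'n::finite isom set \<Rightarrow> 'n isom set \<Rightarrow> (real^'n) set \<Rightarrow> bool" where
  "cocompact_translation_pair \<Gamma> G V \<longleftrightarrow>
     subgroup_E G \<and> G \<subseteq> \<Gamma> \<and> affine_subspace V \<and>
     (\<forall>g\<in>G. iso_app g ` V = V) \<and>
     (\<forall>g\<in>G. \<exists>t. \<forall>x\<in>V. iso_app g x = x + t) \<and>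
     compact_orbit_space G V"

definition fi_cocompact_translation_pair ::
    "'n::finite isom set \<Rightarrow> 'n isom set \<Rightarrow> (real^'n) set \<Rightarrow> bool" where
  "fi_cocompact_translation_pair \<Gamma> G V \<longleftrightarrow>
     cocompact_translation_pair \<Gamma> G V \<and> finite_index \<Gamma> G"

end

theory Submission
  imports Defs
begin

lemma iso_dist:
  assumes "g \<in> Eucl"
  shows "dist (iso_app g x) (iso_app g y) = dist x y"
proof -
  obtain A b where g: "g = (A, b)" "orthogonal_matrix A" using assms by (auto simp: Eucl_def)
  have ot: "orthogonal_transformation (\<lambda>x. A *v x)"
    using g(2) by (simp add: orthogonal_transformation_matrix)
  have "iso_app g x - iso_app g y = A *v (x - y)"
    by (simp add: g iso_app_def matrix_vector_mult_diff_distrib)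
  then show ?thesis using orthogonal_transformation_norm[OF ot] by (simp add: dist_norm)
qed

lemma iso_inv_left:
  assumes "g \<in> Eucl"
  shows "iso_app (iso_inv g) (iso_app g y) = y"
proof -
  obtain A b where g: "g = (A, b)" "orthogonal_matrix A" using assms by (auto simp: Eucl_def)
  have "transpose A ** A = mat 1" using g(2) by (simp add: orthogonal_matrix_def)
  then show ?thesis
    by (simp add: g iso_app_def iso_inv_def matrix_vector_right_distrib matrix_vector_mul_assoc)
qed

lemma iso_inv_right:
  assumes "g \<in> Eucl"
  shows "iso_app g (iso_app (iso_inv g) y) = y"
proof -
  obtain A b where g: "g = (A, b)" "orthogonal_matrix A" using assms by (auto simp: Eucl_def)
  have "A ** transpose A = mat 1" using g(2) by (simp add: orthogonal_matrix_def)
  then have e: "A *v (transpose A *v z) = z" for z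
    by (metis matrix_vector_mul_assoc matrix_vector_mul_lid)
  have "iso_app g (iso_app (iso_inv g) y) = A *v (transpose A *v (y - b)) + b"
    unfolding g iso_app_def iso_inv_def by (simp add: matrix_vector_mult_diff_distrib)
  then show ?thesis using e by simp
qed

lemma iso_comp_app: "iso_app (iso_comp g h) y = iso_app g (iso_app h y)"
  by (simp add: iso_app_def iso_comp_def matrix_vector_right_distrib matrix_vector_mul_assoc add.assoc)

lemma iso_comp_id: "iso_comp g iso_id = g"
  by (simp add: iso_comp_def iso_id_def)

lemma iso_cont: "continuous_on UNIV (iso_app g)"
  unfolding iso_app_def by (intro continuous_intros)

lemma cocompact_bound:
  assumes "compact_orbit_space G V" and "G \<subseteq> Eucl" and "\<forall>g\<in>G. iso_app g ` V = V"
  shows "\<exists>R. \<forall>x\<in>V. \<exists>g\<in>G. dist (iso_app g x) x0 \<le> R"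
proof -
  obtain Y :: "(real^'a) set topology" and q where
    qm: "quotient_map (top_of_set V) Y q" and
    fib: "\<forall>x\<in>V. \<forall>y\<in>V. q x = q y \<longleftrightarrow> (\<exists>g\<in>G. iso_app g x = y)" and
    cY: "compact_space Y"
    using assms(1) unfolding compact_orbit_space_def by blast
  have img: "q ` V = topspace Y" and op: "\<And>U. U \<subseteq> topspace Y \<Longrightarrow>
      openin (top_of_set V) {x. x \<in> V \<and> q x \<in> U} \<longleftrightarrow> openin Y U"
    using qm unfolding quotient_map_def by auto
  define U where "U n = q ` (V \<inter> ball x0 (real n))" for n :: nat
  have opU: "openin Y (U n)" for n
  proof -
    have sub: "U n \<subseteq> topspace Y" using img unfolding U_def by auto
    have eq: "{x. x \<in> V \<and> q x \<in> U n} = V \<inter> (\<Union>g\<in>G. iso_app g -` ball x0 (real n))"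
    proof (intro set_eqI iffI)
      fix x assume "x \<in> {x. x \<in> V \<and> q x \<in> U n}"
      then obtain y where x: "x \<in> V" and y: "y \<in> V" "y \<in> ball x0 (real n)" "q x = q y"
        unfolding U_def by auto
      then obtain g where "g \<in> G" "iso_app g x = y" using fib by blast
      then show "x \<in> V \<inter> (\<Union>g\<in>G. iso_app g -` ball x0 (real n))" using x y by auto
    next
      fix x assume "x \<in> V \<inter> (\<Union>g\<in>G. iso_app g -` ball x0 (real n))"
      then obtain g where x: "x \<in> V" and g: "g \<in> G" "iso_app g x \<in> ball x0 (real n)" by auto
      have gV: "iso_app g x \<in> V" using assms(3) g(1) x by blast
      have "q x = q (iso_app g x)" using fib x gV g(1) by blast
      then show "x \<in> {x. x \<in> V \<and> q x \<in> U n}" using x gV g unfolding U_def by auto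
    qed
    have "open (\<Union>g\<in>G. iso_app g -` ball x0 (real n))"
      using iso_cont by (intro open_UN ballI open_vimage) auto
    then have "openin (top_of_set V) {x. x \<in> V \<and> q x \<in> U n}"
      unfolding eq by (auto simp: openin_open)
    then show ?thesis using op[OF sub] by simp
  qed
  have cov: "topspace Y \<subseteq> \<Union>(range U)"
  proof
    fix z assume "z \<in> topspace Y"
    then obtain x where x: "x \<in> V" "z = q x" using img by auto
    obtain n :: nat where "dist x0 x < real n" using reals_Archimedean2 by blast
    then have "z \<in> U n" using x unfolding U_def by auto
    then show "z \<in> \<Union>(range U)" by blast
  qed
  obtain F where F: "finite F" "F \<subseteq> range U" "topspace Y \<subseteq> \<Union>F"
    using cY cov opU unfolding compact_space_def compactin_def by (metis rangeE)
  obtain N where N: "F \<subseteq> U ` {..N}"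
  proof -
    obtain I where I: "finite I" "F = U ` I"
      using F(1,2) finite_subset_image by metis
    show ?thesis using I by (intro that[of "Max I"]) auto
  qed
  have mono: "U m \<subseteq> U N" if "m \<le> N" for m
    using that unfolding U_def by (intro image_mono) auto
  have cov2: "topspace Y \<subseteq> U N" using F(3) N mono by fastforce
  show ?thesis
  proof (intro exI ballI)
    fix x assume x: "x \<in> V"
    then have "q x \<in> U N" using cov2 img by auto
    then obtain y where y: "y \<in> V" "dist x0 y < real N" "q x = q y" unfolding U_def by auto
    then obtain g where "g \<in> G" "iso_app g x = y" using fib x by blast
    then show "\<exists>g\<in>G. dist (iso_app g x) x0 \<le> real N" using y by (metis dist_commute less_eq_real_def)
  qed
qed

lemma bounded_dist:
  assumes G: "subgroup_E G" "G \<subseteq> \<Gamma>" and GV: "\<forall>g\<in>G. iso_app g ` V = V"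
    and cc: "compact_orbit_space G V"
    and G': "subgroup_E G'" and G'V: "\<forall>g\<in>G'. iso_app g ` V' = V'"
    and fi: "finite_index \<Gamma> G'" and \<Gamma>: "\<Gamma> \<subseteq> Eucl" and y': "y' \<in> V'"
  shows "\<exists>B. \<forall>x\<in>V. \<exists>y\<in>V'. dist x y \<le> B"
proof -
  have GE: "G \<subseteq> Eucl" using G unfolding subgroup_E_def by blast
  have G'E: "G' \<subseteq> Eucl" and G'inv: "\<forall>h\<in>G'. iso_inv h \<in> G'" and G'id: "iso_id \<in> G'"
    using G' unfolding subgroup_E_def by blast+
  obtain R where R: "\<forall>x\<in>V. \<exists>g\<in>G. dist (iso_app g x) x0 \<le> R"
    using cocompact_bound[OF cc GE GV] by blast
  obtain F where F: "F \<subseteq> \<Gamma>" "finite F" "(\<lambda>g. iso_comp g ` G') ` \<Gamma> = (\<lambda>g. iso_comp g ` G') ` F"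
    using fi unfolding finite_index_def proof -
    have "finite ((\<lambda>g. iso_comp g ` G') ` \<Gamma>)" using fi unfolding finite_index_def .
    from finite_subset_image[OF this order_refl] show ?thesis using that by blast
  qed
  define M where "M = (\<Sum>c\<in>F. dist (iso_app (iso_inv c) x0) y')"
  have M: "dist (iso_app (iso_inv c) x0) y' \<le> M" if "c \<in> F" for c
    unfolding M_def using F(2) that by (intro member_le_sum) auto
  show ?thesis
  proof (intro exI ballI)
    fix x assume x: "x \<in> V"
    obtain g where g: "g \<in> G" "dist (iso_app g x) x0 \<le> R" using R x by blast
    have gE: "g \<in> Eucl" using g GE by blast
    define q where "q = iso_app (iso_inv g) x0"
    have gq: "iso_app g q = x0" unfolding q_def using iso_inv_right[OF gE] .
    have dq: "dist q x \<le> R" using g(2) iso_dist[OF gE, of q x] gq by (simp add: dist_commute)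
    have "g \<in> iso_comp g ` G'" using G'id iso_comp_id[of g] by (metis image_eqI)
    moreover have "iso_comp g ` G' \<in> (\<lambda>g. iso_comp g ` G') ` F" using F(3) g(1) G(2) by blast
    ultimately obtain c where c: "c \<in> F" and "g \<in> iso_comp c ` G'"
      by (metis (no_types, lifting) imageE)
    then obtain h where h: "h \<in> G'" and gch: "g = iso_comp c h" by blast
    have cE: "c \<in> Eucl" using c F(1) \<Gamma> by blast
    have hE: "h \<in> Eucl" using h G'E by blast
    have "iso_app c (iso_app h q) = x0" using gq unfolding gch iso_comp_app .
    then have hq: "iso_app h q = iso_app (iso_inv c) x0" using iso_inv_left[OF cE, of "iso_app h q"] by simp
    define w where "w = iso_app (iso_inv h) y'"
    have wV: "w \<in> V'" unfolding w_def using G'V G'inv h y' by blast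
    have "iso_app h w = y'" unfolding w_def using iso_inv_right[OF hE] .
    then have "dist q w = dist (iso_app (iso_inv c) x0) y'" using iso_dist[OF hE, of q w] hq by simp
    then have "dist q w \<le> M" using M[OF c] by simp
    then have "dist x w \<le> R + M" using dq dist_triangle[of x w q] by (simp add: dist_commute)
    then show "\<exists>y\<in>V'. dist x y \<le> R + M" using wV by blast
  qed
qed


lemma parallel_from_bounded:
  fixes V V' :: "(real^'n::finite) set"
  assumes aV: "affine V" and aV': "affine V'" and x0: "x0 \<in> V" and y0: "y0 \<in> V'"
    and B: "\<forall>x\<in>V. \<exists>y\<in>V'. dist x y \<le> B" and v: "x0 + v \<in> V"
  shows "y0 + v \<in> V'"
proof -
  have cl: "closed V'" using affine_closed[OF aV'] .
  have B0: "B \<ge> 0" using B x0 by (meson dist_nz dual_order.trans zero_le_dist)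
  have "\<exists>y\<in>V'. dist y (y0 + v) < e" if e: "e > 0" for e
  proof -
    define s where "s = (B + dist x0 y0 + 1) / e"
    have s: "s > 0" using e B0 zero_le_dist[of x0 y0] unfolding s_def by (intro divide_pos_pos) linarith+
    have "(1 - s) *\<^sub>R x0 + s *\<^sub>R (x0 + v) \<in> V"
      using aV x0 v unfolding affine_def by simp
    then have xs: "x0 + s *\<^sub>R v \<in> V" by (simp add: algebra_simps)
    then obtain y where y: "y \<in> V'" "dist (x0 + s *\<^sub>R v) y \<le> B" using B by blast
    have "(1 - 1/s) *\<^sub>R y0 + (1/s) *\<^sub>R y \<in> V'"
      using aV' y0 y(1) unfolding affine_def by simp
    moreover have "(1 - 1/s) *\<^sub>R y0 + (1/s) *\<^sub>R y = y0 + (1/s) *\<^sub>R (y - y0)"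
      by (simp add: algebra_simps)
    moreover have "dist (y0 + (1/s) *\<^sub>R (y - y0)) (y0 + v) < e"
    proof -
      have "y0 + (1/s) *\<^sub>R (y - y0) - (y0 + v) = (1/s) *\<^sub>R ((y - (x0 + s *\<^sub>R v)) + (x0 - y0))"
        using s by (simp add: algebra_simps)
      then have "dist (y0 + (1/s) *\<^sub>R (y - y0)) (y0 + v) = (1/s) * norm ((y - (x0 + s *\<^sub>R v)) + (x0 - y0))"
        using s by (simp add: dist_norm)
      also have "\<dots> \<le> (1/s) * (B + dist x0 y0)"
      proof -
        have "norm ((y - (x0 + s *\<^sub>R v)) + (x0 - y0)) \<le> norm (y - (x0 + s *\<^sub>R v)) + norm (x0 - y0)"
          by (rule norm_triangle_ineq)
        also have "\<dots> \<le> B + dist x0 y0" using y(2) by (simp add: dist_norm norm_minus_commute)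
        finally show ?thesis using s by (simp add: divide_right_mono)
      qed
      also have "\<dots> < e"
        using s e B0 by (simp add: s_def field_simps)
      finally show ?thesis .
    qed
    ultimately show ?thesis by metis
  qed
  then show ?thesis using closed_approachable[OF cl] by blast
qed


theorem mainTheorem7:
  fixes \<Gamma> G G' :: "'n::finite isom set" and V V' :: "(real^'n) set"
  assumes "discrete_subgroup_E \<Gamma>"
    and "fi_cocompact_translation_pair \<Gamma> G V"
    and "fi_cocompact_translation_pair \<Gamma> G' V'"
  shows "(\<exists>a. V' = (\<lambda>x. x + a) ` V) \<and> aff_dim V = aff_dim V'"
proof -
  have \<Gamma>: "\<Gamma> \<subseteq> Eucl" using assms(1) unfolding discrete_subgroup_E_def subgroup_E_def by blast
  note P = assms(2) assms(3)
  have sG: "subgroup_E G" "G \<subseteq> \<Gamma>" "affine V" "V \<noteq> {}" "\<forall>g\<in>G. iso_app g ` V = V"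
      "compact_orbit_space G V" "finite_index \<Gamma> G"
    using P(1) unfolding fi_cocompact_translation_pair_def cocompact_translation_pair_def
      affine_subspace_def by blast+
  have sG': "subgroup_E G'" "G' \<subseteq> \<Gamma>" "affine V'" "V' \<noteq> {}" "\<forall>g\<in>G'. iso_app g ` V' = V'"
      "compact_orbit_space G' V'" "finite_index \<Gamma> G'"
    using P(2) unfolding fi_cocompact_translation_pair_def cocompact_translation_pair_def
      affine_subspace_def by blast+
  obtain x0 where x0: "x0 \<in> V" using sG(4) by blast
  obtain y0 where y0: "y0 \<in> V'" using sG'(4) by blast
  obtain B where B: "\<forall>x\<in>V. \<exists>y\<in>V'. dist x y \<le> B"
    using bounded_dist[OF sG(1,2,5,6) sG'(1,5,7) \<Gamma> y0] by blast
  obtain B' where B': "\<forall>x\<in>V'. \<exists>y\<in>V. dist x y \<le> B'"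
    using bounded_dist[OF sG'(1,2,5,6) sG(1,5,7) \<Gamma> x0] by blast
  have eq: "V' = (\<lambda>x. x + (y0 - x0)) ` V"
  proof (intro set_eqI iffI)
    fix y assume y: "y \<in> V'"
    have "y0 + (y - y0) \<in> V'" using y by simp
    then have "x0 + (y - y0) \<in> V" using parallel_from_bounded[OF sG'(3) sG(3) y0 x0 B'] by blast
    moreover have "y = (x0 + (y - y0)) + (y0 - x0)" by simp
    ultimately show "y \<in> (\<lambda>x. x + (y0 - x0)) ` V" by blast
  next
    fix y assume "y \<in> (\<lambda>x. x + (y0 - x0)) ` V"
    then obtain x where x: "x \<in> V" "y = x + (y0 - x0)" by blast
    have "x0 + (x - x0) \<in> V" using x by simp
    then have "y0 + (x - x0) \<in> V'" using parallel_from_bounded[OF sG(3) sG'(3) x0 y0 B] by blast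
    moreover have "y = y0 + (x - x0)" using x(2) by simp
    ultimately show "y \<in> V'" by simp
  qed
  have "aff_dim V' = aff_dim V"
    unfolding eq using aff_dim_translation_eq[of "y0 - x0" V] by (simp add: add.commute)
  then show ?thesis using eq by auto
qed

end
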